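(* Let $\mathcal{A}=\langle Q,\Sigma,\delta\rangle$ be a semisimple synchronizing automaton with $n=|Q|$ states and former-rank $r=\mathrm{Fr}(\mathcal{A})\ge 2$. Then $\mathcal{A}$ has a reset word of length at most $(n-1)D(2,r,n)$. In particular, $\mathcal{A}$ has a reset word of length at most $\dfrac{n(n-1)^2}{r(r-1)}$.
   Context: An automaton $\mathcal{A}=\langle Q,\Sigma,\delta\rangle$ has finite state set $Q=\{q_1,\dots,q_n\}$, finite alphabet $\Sigma$ and transition function $\delta:Q\times\Sigma\to Q$; write $q\cdot u$ for the action of a word $u\in\Sigma^*$, extended to subsets of $Q$. A word $u$ is reset (synchronizing) if $|Q\cdot u|=1$; $\mathrm{Syn}(\mathcal{A})$ denotes the set of reset words, and $\mathcal{A}$ is synchronizing if $\mathrm{Syn}(\mathcal{A})\neq\emptyset$. Each word $u$ acts linearly on $\mathbb{C}Q$ (basis $Q$) by $q\mapsto q\cdot u$; this action preserves $w^\perp=\{x\in\mathbb{C}Q:\langle x,w\rangle=0\}$, where $w=q_1+\dots+q_n$, and $u$ is reset iff it acts as $0$ on $w^\perp$. Let $\rho:\Sigma^*\to \mathrm{End}(w^\perp)\cong\mathbb{M}_{n-1}(\mathbb{C})$ be the induced representation ($\rho(uv)=\rho(u)\rho(v)$), and let $\mathcal{R}$ be the $\mathbb{C}$-subalgebra of $\mathbb{M}_{n-1}(\mathbb{C})$ generated by $\rho(\Sigma^* )$, with Jacobson radical $\mathrm{Rad}(\mathcal{R})$. The set of radical words is $\mathrm{Rad}(\mathcal{A})=\rho^{-1}(\mathrm{Rad}(\mathcal{R}))\supseteq\mathrm{Syn}(\mathcal{A})$.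 A synchronizing automaton is semisimple if $\mathrm{Rad}(\mathcal{A})=\mathrm{Syn}(\mathcal{A})$ (equivalently $\mathrm{Rad}(\mathcal{R})\cap\rho(\Sigma^* )=\{0\}$). The former-rank is $\mathrm{Fr}(\mathcal{A})=\min\{|Q\cdot u|: u\in\Sigma^*\setminus\mathrm{Syn}(\mathcal{A})\}$. For integers $t,r\le n$, the packing number $D(t,r,n)$ is the maximum size of a family of $r$-element subsets of $[1,n]$ such that no $t$-element subset is contained in more than one member of the family. *)

theory Defs
  imports Complex_Main "HOL-Library.Cardinality"
begin

text \<open>Automaton: finite state type 'q (n = CARD('q)), finite alphabet type 'a,
  transition function delta :: 'q => 'a => 'q. Words are lists over 'a.\<close>

definition word_act :: "('q \<Rightarrow> 'a \<Rightarrow> 'q) \<Rightarrow> 'q \<Rightarrow> 'a list \<Rightarrow> 'q" where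
  "word_act \<delta> q u = foldl \<delta> q u"

definition is_reset :: "('q \<Rightarrow> 'a \<Rightarrow> 'q) \<Rightarrow> 'a list \<Rightarrow> bool" where
  "is_reset \<delta> u \<longleftrightarrow> card ((\<lambda>q. word_act \<delta> q u) ` UNIV) = 1"

definition Syn :: "('q \<Rightarrow> 'a \<Rightarrow> 'q) \<Rightarrow> 'a list set" where
  "Syn \<delta> = {u. is_reset \<delta> u}"

definition synchronizing :: "('q \<Rightarrow> 'a \<Rightarrow> 'q) \<Rightarrow> bool" where
  "synchronizing \<delta> \<longleftrightarrow> Syn \<delta> \<noteq> {}"

text \<open>Linear action of a word on CQ (vectors 'q => complex): basis vector q maps to q.u\<close>
definition lin_act :: "('q::finite \<Rightarrow> 'a \<Rightarrow> 'q) \<Rightarrow> 'a list \<Rightarrow> ('q \<Rightarrow> complex) \<Rightarrow> ('q \<Rightarrow> complex)" where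
  "lin_act \<delta> u x = (\<lambda>p. \<Sum>q\<in>{q. word_act \<delta> q u = p}. x q)"

text \<open>w-perp, w = sum of all basis vectors: <x,w> = sum_q x_q * cnj 1\<close>
definition wperp :: "('q::finite \<Rightarrow> complex) set" where
  "wperp = {x. (\<Sum>q\<in>UNIV. x q * cnj 1) = 0}"

text \<open>Endomorphisms of w-perp are represented as maps on CQ that vanish outside w-perp.
  rho u is the restriction of the action of u to w-perp.\<close>
definition rho :: "('q::finite \<Rightarrow> 'a \<Rightarrow> 'q) \<Rightarrow> 'a list \<Rightarrow> ('q \<Rightarrow> complex) \<Rightarrow> ('q \<Rightarrow> complex)" where
  "rho \<delta> u = (\<lambda>x. if x \<in> wperp then lin_act \<delta> u x else (\<lambda>p. 0))"

inductive_set alg_gen :: "(('q \<Rightarrow> complex) \<Rightarrow> ('q \<Rightarrow> complex)) set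
    \<Rightarrow> (('q \<Rightarrow> complex) \<Rightarrow> ('q \<Rightarrow> complex)) set" for S where
  gen: "f \<in> S \<Longrightarrow> f \<in> alg_gen S"
| zero: "(\<lambda>x. \<lambda>p. 0) \<in> alg_gen S"
| add: "f \<in> alg_gen S \<Longrightarrow> g \<in> alg_gen S \<Longrightarrow> (\<lambda>x. \<lambda>p. f x p + g x p) \<in> alg_gen S"
| smult: "f \<in> alg_gen S \<Longrightarrow> (\<lambda>x. (\<lambda>p. (c::complex) * f x p)) \<in> alg_gen S"
| mult: "f \<in> alg_gen S \<Longrightarrow> g \<in> alg_gen S \<Longrightarrow> (f \<circ> g) \<in> alg_gen S"

definition R_alg :: "('q::finite \<Rightarrow> 'a \<Rightarrow> 'q) \<Rightarrow> (('q \<Rightarrow> complex) \<Rightarrow> ('q \<Rightarrow> complex)) set" where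
  "R_alg \<delta> = alg_gen (range (rho \<delta>))"

definition left_ideal :: "(('q \<Rightarrow> complex) \<Rightarrow> ('q \<Rightarrow> complex)) set
    \<Rightarrow> (('q \<Rightarrow> complex) \<Rightarrow> ('q \<Rightarrow> complex)) set \<Rightarrow> bool" where
  "left_ideal R L \<longleftrightarrow> L \<subseteq> R \<and> (\<lambda>x. \<lambda>p. 0) \<in> L
     \<and> (\<forall>f\<in>L. \<forall>g\<in>L. (\<lambda>x. \<lambda>p. f x p + g x p) \<in> L)
     \<and> (\<forall>f\<in>L. (\<lambda>x. \<lambda>p. - f x p) \<in> L)
     \<and> (\<forall>r\<in>R. \<forall>f\<in>L. r \<circ> f \<in> L)"

definition maximal_left_ideal :: "(('q \<Rightarrow> complex) \<Rightarrow> ('q \<Rightarrow> complex)) set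
    \<Rightarrow> (('q \<Rightarrow> complex) \<Rightarrow> ('q \<Rightarrow> complex)) set \<Rightarrow> bool" where
  "maximal_left_ideal R L \<longleftrightarrow> left_ideal R L \<and> L \<noteq> R
     \<and> (\<forall>L'. left_ideal R L' \<and> L \<subseteq> L' \<longrightarrow> L' = L \<or> L' = R)"

definition jacobson_rad :: "(('q \<Rightarrow> complex) \<Rightarrow> ('q \<Rightarrow> complex)) set
    \<Rightarrow> (('q \<Rightarrow> complex) \<Rightarrow> ('q \<Rightarrow> complex)) set" where
  "jacobson_rad R = {f\<in>R. \<forall>L. maximal_left_ideal R L \<longrightarrow> f \<in> L}"

definition Rad_words :: "('q::finite \<Rightarrow> 'a \<Rightarrow> 'q) \<Rightarrow> 'a list set" where
  "Rad_words \<delta> = {u. rho \<delta> u \<in> jacobson_rad (R_alg \<delta>)}"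

definition semisimple :: "('q::finite \<Rightarrow> 'a \<Rightarrow> 'q) \<Rightarrow> bool" where
  "semisimple \<delta> \<longleftrightarrow> synchronizing \<delta> \<and> Rad_words \<delta> = Syn \<delta>"

definition former_rank :: "('q \<Rightarrow> 'a \<Rightarrow> 'q) \<Rightarrow> nat" where
  "former_rank \<delta> = Min {card ((\<lambda>q. word_act \<delta> q u) ` UNIV) | u. u \<notin> Syn \<delta>}"

definition packing_number :: "nat \<Rightarrow> nat \<Rightarrow> nat \<Rightarrow> nat" where
  "packing_number t r n = Max {card F | F.
      F \<subseteq> {S. S \<subseteq> {1..n} \<and> card S = r}
      \<and> (\<forall>T. T \<subseteq> {1..n} \<and> card T = t \<longrightarrow> card {S\<in>F. T \<subseteq> S} \<le> 1)}"

end

theory Submission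
  imports Defs
begin

lemma wperp_iff: "x \<in> wperp \<longleftrightarrow> sum x UNIV = 0"
  by (simp add: wperp_def)

lemma word_act_append: "word_act \<delta> q (u @ v) = word_act \<delta> (word_act \<delta> q u) v"
  by (simp add: word_act_def)

lemma word_act_Nil[simp]: "word_act \<delta> q [] = q"
  by (simp add: word_act_def)

lemma lin_act_add:
  "lin_act \<delta> u (\<lambda>p. x p + y p) = (\<lambda>p. lin_act \<delta> u x p + lin_act \<delta> u y p)"
  by (simp add: lin_act_def sum.distrib)

lemma lin_act_smult:
  "lin_act \<delta> u (\<lambda>p. c * x p) = (\<lambda>p. c * lin_act \<delta> u x p)"
  by (simp add: lin_act_def sum_distrib_left)

lemma lin_act_sum:
  fixes \<delta> :: "'q::finite \<Rightarrow> 'a \<Rightarrow> 'q"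
  shows "sum (lin_act \<delta> u x) UNIV = sum x UNIV"
proof -
  have "sum (lin_act \<delta> u x) UNIV = (\<Sum>p\<in>UNIV. sum x {q. q \<in> UNIV \<and> word_act \<delta> q u = p})"
    by (simp add: lin_act_def)
  also have "\<dots> = sum x UNIV"
    by (rule sum.group) auto
  finally show ?thesis .
qed

lemma lin_act_wperp: "x \<in> wperp \<Longrightarrow> lin_act \<delta> u x \<in> wperp"
  by (simp add: wperp_iff lin_act_sum)

lemma lin_act_Nil: "lin_act \<delta> [] x = x"
  by (simp add: lin_act_def)

lemma lin_act_append:
  fixes \<delta> :: "'q::finite \<Rightarrow> 'a \<Rightarrow> 'q"
  shows "lin_act \<delta> (u @ v) x = lin_act \<delta> v (lin_act \<delta> u x)"
proof
  fix p
  have "lin_act \<delta> v (lin_act \<delta> u x) p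
     = (\<Sum>s\<in>{s. word_act \<delta> s v = p}. sum x {q. q \<in> {q. word_act \<delta> (word_act \<delta> q u) v = p} \<and> word_act \<delta> q u = s})"
    unfolding lin_act_def by (intro sum.cong) auto
  also have "\<dots> = sum x {q. word_act \<delta> (word_act \<delta> q u) v = p}"
    by (rule sum.group) auto
  finally show "lin_act \<delta> (u @ v) x p = lin_act \<delta> v (lin_act \<delta> u x) p"
    by (simp add: lin_act_def word_act_append)
qed

lemma zero_wperp[simp]: "(\<lambda>p. 0) \<in> wperp"
  by (simp add: wperp_iff)

lemma add_wperp: "x \<in> wperp \<Longrightarrow> y \<in> wperp \<Longrightarrow> (\<lambda>p. x p + y p) \<in> wperp"
  by (simp add: wperp_iff sum.distrib)

lemma smult_wperp: "x \<in> wperp \<Longrightarrow> (\<lambda>p. c * x p) \<in> wperp"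
  by (simp add: wperp_iff sum_distrib_left[symmetric])

lemma lin_act_zero: "lin_act \<delta> u (\<lambda>p. 0) = (\<lambda>p. 0)"
  by (simp add: lin_act_def)

definition good :: "(('q::finite \<Rightarrow> complex) \<Rightarrow> ('q \<Rightarrow> complex)) \<Rightarrow> bool" where
  "good f \<longleftrightarrow> (\<forall>x. x \<notin> wperp \<longrightarrow> f x = (\<lambda>p. 0)) \<and> (\<forall>x. f x \<in> wperp)
     \<and> (\<forall>x\<in>wperp. \<forall>y\<in>wperp. f (\<lambda>p. x p + y p) = (\<lambda>p. f x p + f y p))
     \<and> (\<forall>x\<in>wperp. \<forall>c. f (\<lambda>p. c * x p) = (\<lambda>p. c * f x p))"

lemma good_zero: "good f \<Longrightarrow> f (\<lambda>p. 0) = (\<lambda>p. 0)"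
proof -
  assume "good f"
  then have h: "\<forall>x\<in>wperp. \<forall>c. f (\<lambda>p. c * x p) = (\<lambda>p. c * f x p)"
    unfolding good_def by blast
  have "f (\<lambda>p. 0 * (\<lambda>p. (0::complex)) p) = (\<lambda>p. 0 * f (\<lambda>p. 0) p)"
    using bspec[OF h zero_wperp] by blast
  then show ?thesis by simp
qed

lemma rho_good: "good (rho \<delta> u)"
  unfolding good_def rho_def
  by (auto simp: lin_act_wperp add_wperp smult_wperp lin_act_add lin_act_smult)

lemma rho_append: "rho \<delta> (u @ v) = rho \<delta> v \<circ> rho \<delta> u"
proof
  fix x
  show "rho \<delta> (u @ v) x = (rho \<delta> v \<circ> rho \<delta> u) x"
    by (simp add: rho_def lin_act_append lin_act_wperp lin_act_zero)
qed

lemma rho_Nil_in: "x \<in> wperp \<Longrightarrow> rho \<delta> [] x = x"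
  by (simp add: rho_def lin_act_Nil)

lemma rho_reset:
  fixes \<delta> :: "'q::finite \<Rightarrow> 'a \<Rightarrow> 'q"
  assumes "is_reset \<delta> u"
  shows "rho \<delta> u = (\<lambda>x p. 0)"
proof -
  from assms have "card (range (\<lambda>q. word_act \<delta> q u)) = 1"
    unfolding is_reset_def by simp
  then obtain c where c: "range (\<lambda>q. word_act \<delta> q u) = {c}"
    by (rule card_1_singletonE)
  then have cq: "\<And>q. word_act \<delta> q u = c" by auto
  show ?thesis
  proof (intro ext)
    fix x p
    show "rho \<delta> u x p = 0"
    proof (cases "x \<in> wperp")
      case True
      then show ?thesis
        by (cases "p = c") (auto simp: rho_def lin_act_def cq wperp_iff)
    qed (simp add: rho_def)
  qed
qed

lemma alg_good:
  fixes \<delta> :: "'q::finite \<Rightarrow> 'a \<Rightarrow> 'q"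
  assumes "f \<in> R_alg \<delta>"
  shows "good f"
  using assms unfolding R_alg_def
proof (induction rule: alg_gen.induct)
  case (gen f)
  then show ?case using rho_good by auto
next
  case zero
  then show ?case by (simp add: good_def)
next
  case (add f g)
  then show ?case
    unfolding good_def
    by (auto simp: add_wperp algebra_simps fun_eq_iff)
next
  case (smult f c)
  then show ?case
    unfolding good_def
    by (auto simp: smult_wperp algebra_simps fun_eq_iff)
next
  case (mult f g)
  have gf: "good f" "good g" using mult by auto
  then have f0: "f (\<lambda>p. 0) = (\<lambda>p. 0)" using good_zero by blast
  from gf have A: "\<forall>x. x \<notin> wperp \<longrightarrow> g x = (\<lambda>p. 0)" "\<forall>x. f x \<in> wperp" "\<forall>x. g x \<in> wperp"
     "\<forall>x\<in>wperp. \<forall>y\<in>wperp. f (\<lambda>p. x p + y p) = (\<lambda>p. f x p + f y p)"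
     "\<forall>x\<in>wperp. \<forall>c. f (\<lambda>p. c * x p) = (\<lambda>p. c * f x p)"
     "\<forall>x\<in>wperp. \<forall>y\<in>wperp. g (\<lambda>p. x p + y p) = (\<lambda>p. g x p + g y p)"
     "\<forall>x\<in>wperp. \<forall>c. g (\<lambda>p. c * x p) = (\<lambda>p. c * g x p)"
    unfolding good_def by blast+
  show ?case
    unfolding good_def
  proof (intro conjI ballI allI impI)
    fix x :: "'q \<Rightarrow> complex" assume "x \<notin> wperp" then show "(f \<circ> g) x = (\<lambda>p. 0)" using A f0 by simp
  next
    fix x :: "'q \<Rightarrow> complex" show "(f \<circ> g) x \<in> wperp" using A by simp
  next
    fix x y :: "'q \<Rightarrow> complex" assume "x \<in> wperp" "y \<in> wperp"
    then show "(f \<circ> g) (\<lambda>p. x p + y p) = (\<lambda>p. (f \<circ> g) x p + (f \<circ> g) y p)"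
      using A by simp
  next
    fix x :: "'q \<Rightarrow> complex" and c :: complex assume "x \<in> wperp"
    then show "(f \<circ> g) (\<lambda>p. c * x p) = (\<lambda>p. c * (f \<circ> g) x p)"
      using A by simp
  qed
qed


lemma rho_in_R: "rho \<delta> u \<in> R_alg \<delta>"
  unfolding R_alg_def by (rule alg_gen.gen) simp

lemma R_neg: "g \<in> R_alg \<delta> \<Longrightarrow> (\<lambda>x p. - g x p) \<in> R_alg \<delta>"
proof -
  assume "g \<in> R_alg \<delta>"
  then have "(\<lambda>x p. (-1) * g x p) \<in> R_alg \<delta>"
    unfolding R_alg_def by (rule alg_gen.smult)
  then show ?thesis by simp
qed

lemma R_add: "f \<in> R_alg \<delta> \<Longrightarrow> g \<in> R_alg \<delta> \<Longrightarrow> (\<lambda>x p. f x p + g x p) \<in> R_alg \<delta>"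
  unfolding R_alg_def by (rule alg_gen.add)

lemma R_mult: "f \<in> R_alg \<delta> \<Longrightarrow> g \<in> R_alg \<delta> \<Longrightarrow> f \<circ> g \<in> R_alg \<delta>"
  unfolding R_alg_def by (rule alg_gen.mult)

lemma R_zero: "(\<lambda>x p. 0) \<in> R_alg \<delta>"
  unfolding R_alg_def by (rule alg_gen.zero)

lemma good_parts:
  assumes "good f"
  shows "\<And>x. x \<notin> wperp \<Longrightarrow> f x = (\<lambda>p. 0)" "\<And>x. f x \<in> wperp"
     "\<And>x y. x\<in>wperp \<Longrightarrow> y\<in>wperp \<Longrightarrow> f (\<lambda>p. x p + y p) = (\<lambda>p. f x p + f y p)"
     "\<And>x c. x\<in>wperp \<Longrightarrow> f (\<lambda>p. c * x p) = (\<lambda>p. c * f x p)"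
  using assms unfolding good_def by blast+

lemma rad_lemma:
  fixes \<delta> :: "'q::finite \<Rightarrow> 'a \<Rightarrow> 'q"
  assumes fR: "f \<in> R_alg \<delta>"
    and nil: "\<And>a. a \<in> R_alg \<delta> \<Longrightarrow> f \<circ> a \<circ> f = (\<lambda>x p. 0)"
  shows "f \<in> jacobson_rad (R_alg \<delta>)"
  unfolding jacobson_rad_def
proof (intro CollectI conjI allI impI fR)
  fix L assume mL: "maximal_left_ideal (R_alg \<delta>) L"
  define R where "R = R_alg \<delta>"
  define id0 where "id0 = rho \<delta> []"
  have id0R: "id0 \<in> R" unfolding id0_def R_def by (rule rho_in_R)
  have gR: "\<And>h. h \<in> R \<Longrightarrow> good h" unfolding R_def by (rule alg_good)
  have gf: "good f" using fR alg_good by blast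
  have hid: "\<And>h. h \<in> R \<Longrightarrow> h \<circ> id0 = h"
  proof
    fix h x assume hR: "h \<in> R"
    show "(h \<circ> id0) x = h x"
    proof (cases "x \<in> wperp")
      case True then show ?thesis by (simp add: id0_def rho_Nil_in)
    next
      case False
      then show ?thesis using good_zero[OF gR[OF hR]] good_parts(1)[OF gR[OF hR]]
        by (simp add: id0_def rho_def)
    qed
  qed
  have idh: "\<And>h. h \<in> R \<Longrightarrow> id0 \<circ> h = h"
  proof
    fix h x assume hR: "h \<in> R"
    show "(id0 \<circ> h) x = h x"
      using good_parts(2)[OF gR[OF hR]] by (simp add: id0_def rho_Nil_in)
  qed
  have LI: "left_ideal R L" and LR: "L \<noteq> R"
    and Lmax: "\<And>L'. left_ideal R L' \<Longrightarrow> L \<subseteq> L' \<Longrightarrow> L' = L \<or> L' = R"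
    using mL unfolding maximal_left_ideal_def R_def by blast+
  have LsubR: "L \<subseteq> R" and L0: "(\<lambda>x p. 0) \<in> L"
    and Ladd: "\<And>a b. a \<in> L \<Longrightarrow> b \<in> L \<Longrightarrow> (\<lambda>x p. a x p + b x p) \<in> L"
    and Lneg: "\<And>a. a \<in> L \<Longrightarrow> (\<lambda>x p. - a x p) \<in> L"
    and Lmul: "\<And>r a. r \<in> R \<Longrightarrow> a \<in> L \<Longrightarrow> r \<circ> a \<in> L"
    using LI unfolding left_ideal_def by blast+
  show "f \<in> L"
  proof (rule ccontr)
    assume fL: "f \<notin> L"
    define L' where "L' = {h. \<exists>l\<in>L. \<exists>g\<in>R. h = (\<lambda>x p. l x p + (g \<circ> f) x p)}"
    have L'I: "left_ideal R L'"
      unfolding left_ideal_def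
    proof (intro conjI ballI subsetI)
      fix h assume "h \<in> L'"
      then obtain l g where "l \<in> L" "g \<in> R" and h: "h = (\<lambda>x p. l x p + (g \<circ> f) x p)"
        unfolding L'_def by blast
      then show "h \<in> R" using LsubR R_add R_mult fR unfolding R_def by blast
    next
      show "(\<lambda>x p. 0) \<in> L'"
        unfolding L'_def using L0 R_zero[of \<delta>] unfolding R_def
        by (intro CollectI bexI[of _ "\<lambda>x p. 0"]) (auto simp: fun_eq_iff)
    next
      fix h1 h2 assume "h1 \<in> L'" "h2 \<in> L'"
      then obtain l1 g1 l2 g2 where l: "l1 \<in> L" "g1 \<in> R" "l2 \<in> L" "g2 \<in> R"
        and h: "h1 = (\<lambda>x p. l1 x p + (g1 \<circ> f) x p)" "h2 = (\<lambda>x p. l2 x p + (g2 \<circ> f) x p)"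
        unfolding L'_def by blast
      show "(\<lambda>x p. h1 x p + h2 x p) \<in> L'"
        unfolding L'_def
        apply (rule CollectI)
        apply (rule bexI[OF _ Ladd[OF l(1,3)]])
        apply (rule bexI[OF _ R_add[OF l(2)[unfolded R_def] l(4)[unfolded R_def], folded R_def]])
        by (simp add: h fun_eq_iff algebra_simps)
    next
      fix h assume "h \<in> L'"
      then obtain l g where l: "l \<in> L" "g \<in> R" and h: "h = (\<lambda>x p. l x p + (g \<circ> f) x p)"
        unfolding L'_def by blast
      show "(\<lambda>x p. - h x p) \<in> L'"
        unfolding L'_def
        apply (rule CollectI)
        apply (rule bexI[OF _ Lneg[OF l(1)]])
        apply (rule bexI[OF _ R_neg[OF l(2)[unfolded R_def], folded R_def]])
        by (simp add: h fun_eq_iff algebra_simps)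
    next
      fix r h assume rR: "r \<in> R" and "h \<in> L'"
      then obtain l g where l: "l \<in> L" "g \<in> R" and h: "h = (\<lambda>x p. l x p + (g \<circ> f) x p)"
        unfolding L'_def by blast
      have lg: "good l" using l LsubR gR by blast
      have gg: "good g" using l gR by blast
      have "r \<circ> h = (\<lambda>x p. (r \<circ> l) x p + ((r \<circ> g) \<circ> f) x p)"
      proof (intro ext)
        fix x p
        show "(r \<circ> h) x p = (r \<circ> l) x p + ((r \<circ> g) \<circ> f) x p"
          using good_parts(3)[OF gR[OF rR] good_parts(2)[OF lg] good_parts(2)[OF gg]]
          by (simp add: h)
      qed
      then show "r \<circ> h \<in> L'"
        unfolding L'_def
        apply (intro CollectI)
        apply (rule bexI[OF _ Lmul[OF rR l(1)]])
        apply (rule bexI[OF _ R_mult[OF rR[unfolded R_def] l(2)[unfolded R_def], folded R_def]])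
        by simp
    qed
    have LL': "L \<subseteq> L'"
    proof
      fix l assume "l \<in> L"
      moreover have "l = (\<lambda>x p. l x p + ((\<lambda>x p. 0) \<circ> f) x p)" by simp
      ultimately show "l \<in> L'" unfolding L'_def using R_zero[of \<delta>] unfolding R_def by blast
    qed
    have fL': "f \<in> L'"
    proof -
      have "f = (\<lambda>x p. (\<lambda>x p. 0) x p + (id0 \<circ> f) x p)"
        using idh[OF fR[folded R_def]] by simp
      show ?thesis unfolding L'_def
        apply (rule CollectI)
        apply (rule bexI[OF _ L0])
        apply (rule bexI[OF _ id0R])
        using idh[OF fR[folded R_def]] by simp
    qed
    have "L' = R" using Lmax[OF L'I LL'] fL fL' by blast
    then have "id0 \<in> L'" using id0R by simp
    then obtain l g where l: "l \<in> L" "g \<in> R" and idd: "id0 = (\<lambda>x p. l x p + (g \<circ> f) x p)"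
      unfolding L'_def by blast
    define i where "i = g \<circ> f"
    have iR: "i \<in> R" unfolding i_def using R_mult[of g \<delta> f] l fR unfolding R_def by blast
    have gi: "good i" using iR gR by blast
    have ii: "\<And>x. i (i x) = (\<lambda>p. 0)"
    proof -
      fix x
      have "(f \<circ> g \<circ> f) x = (\<lambda>p. 0)" using nil[of g] l unfolding R_def by simp
      then have "f (g (f x)) = (\<lambda>p. 0)" by simp
      then show "i (i x) = (\<lambda>p. 0)"
        unfolding i_def using good_zero[OF gR[OF l(2)]] by simp
    qed
    have lx: "\<And>x. l x = (\<lambda>p. id0 x p + (-1) * i x p)"
      using idd unfolding i_def by (simp add: fun_eq_iff)
    have il: "i \<circ> l = i"
    proof
      fix x
      show "(i \<circ> l) x = i x"
      proof (cases "x \<in> wperp")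
        case True
        have ixw: "(\<lambda>p. (-1::complex) * i x p) \<in> wperp" by (rule smult_wperp[OF good_parts(2)[OF gi]])
        have B: "l x = (\<lambda>p. x p + (\<lambda>p. (-1::complex) * i x p) p)"
          using lx True by (simp add: id0_def rho_Nil_in)
        have "i (l x) = i (\<lambda>p. x p + (\<lambda>p. (-1::complex) * i x p) p)" by (simp only: B)
        also have "\<dots> = (\<lambda>p. i x p + i (\<lambda>p. (-1::complex) * i x p) p)"
          by (rule good_parts(3)[OF gi True ixw])
        also have "i (\<lambda>p. (-1::complex) * i x p) = (\<lambda>p. (-1) * i (i x) p)"
          by (rule good_parts(4)[OF gi good_parts(2)[OF gi]])
        also have "(\<lambda>p. i x p + (\<lambda>p. (-1::complex) * i (i x) p) p) = i x"
          using ii[of x] by simp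
        finally show ?thesis by simp
      next
        case False
        have "l x = (\<lambda>p. 0)" using good_parts(1)[OF gR[OF LsubR[THEN subsetD, OF l(1)]] False] .
        then show ?thesis using good_parts(1)[OF gi False] good_zero[OF gi] by simp
      qed
    qed
    have "i \<in> L" using Lmul[OF iR l(1)] il by simp
    then have X: "(\<lambda>x p. l x p + (g \<circ> f) x p) \<in> L" using Ladd[OF l(1)] unfolding i_def by blast
    have "id0 \<in> L" using X by (subst idd)
    then have "R \<subseteq> L" using Lmul hid by (metis subsetI)
    then show False using LsubR LR by blast
  qed
qed

lemma semisimple_uyu:
  fixes \<delta> :: "'q::finite \<Rightarrow> 'a \<Rightarrow> 'q"
  assumes ss: "semisimple \<delta>" and nr: "\<not> is_reset \<delta> u"
  shows "\<exists>y. \<not> is_reset \<delta> (u @ y @ u)"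
proof (rule ccontr)
  assume "\<not> (\<exists>y. \<not> is_reset \<delta> (u @ y @ u))"
  then have allr: "\<And>y. is_reset \<delta> (u @ y @ u)" by blast
  define T where "T = {z. z \<in> wperp \<and> (\<forall>y. rho \<delta> (y @ u) z = (\<lambda>p. 0))}"
  have inv: "\<And>a z. a \<in> R_alg \<delta> \<Longrightarrow> z \<in> T \<Longrightarrow> a z \<in> T"
  proof -
    fix a z assume "a \<in> R_alg \<delta>" "z \<in> T"
    then show "a z \<in> T" unfolding R_alg_def
    proof (induction arbitrary: z rule: alg_gen.induct)
      case (gen f)
      then obtain v where f: "f = rho \<delta> v" by auto
      have "\<forall>y. rho \<delta> (y @ u) (rho \<delta> v z) = (\<lambda>p. 0)"
      proof
        fix y
        have "rho \<delta> (y @ u) (rho \<delta> v z) = rho \<delta> ((v @ y) @ u) z"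
          by (simp add: rho_append)
        also have "\<dots> = (\<lambda>p. 0)" using gen(2) unfolding T_def by blast
        finally show "rho \<delta> (y @ u) (rho \<delta> v z) = (\<lambda>p. 0)" .
      qed
      then show ?case using good_parts(2)[OF rho_good] unfolding T_def f by auto
    next
      case zero
      then show ?case unfolding T_def by (simp add: rho_def lin_act_zero)
    next
      case (add f g)
      have fz: "f z \<in> T" "g z \<in> T" using add by auto
      have "\<forall>y. rho \<delta> (y @ u) (\<lambda>p. f z p + g z p) = (\<lambda>p. 0)"
      proof
        fix y
        have "rho \<delta> (y @ u) (\<lambda>p. f z p + g z p) = (\<lambda>p. rho \<delta> (y @ u) (f z) p + rho \<delta> (y @ u) (g z) p)"
          by (rule good_parts(3)[OF rho_good]) (use fz in \<open>auto simp: T_def\<close>)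
        then show "rho \<delta> (y @ u) (\<lambda>p. f z p + g z p) = (\<lambda>p. 0)" using fz by (simp add: T_def)
      qed
      then show ?case using fz unfolding T_def by (auto intro: add_wperp)
    next
      case (smult f c)
      have fz: "f z \<in> T" using smult by auto
      have "\<forall>y. rho \<delta> (y @ u) (\<lambda>p. c * f z p) = (\<lambda>p. 0)"
      proof
        fix y
        have "rho \<delta> (y @ u) (\<lambda>p. c * f z p) = (\<lambda>p. c * rho \<delta> (y @ u) (f z) p)"
          by (rule good_parts(4)[OF rho_good]) (use fz in \<open>auto simp: T_def\<close>)
        then show "rho \<delta> (y @ u) (\<lambda>p. c * f z p) = (\<lambda>p. 0)" using fz by (simp add: T_def)
      qed
      then show ?case using fz unfolding T_def by (auto intro: smult_wperp)
    next
      case (mult f g)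
      then show ?case by simp
    qed
  qed
  have nil: "\<And>a. a \<in> R_alg \<delta> \<Longrightarrow> rho \<delta> u \<circ> a \<circ> rho \<delta> u = (\<lambda>x p. 0)"
  proof
    fix a x assume aR: "a \<in> R_alg \<delta>"
    have "rho \<delta> u x \<in> T"
    proof -
      have "\<And>y. rho \<delta> (y @ u) (rho \<delta> u x) = rho \<delta> (u @ y @ u) x"
        by (simp add: rho_append)
      then show ?thesis unfolding T_def using rho_reset[OF allr] good_parts(2)[OF rho_good] by simp
    qed
    then have "a (rho \<delta> u x) \<in> T" by (rule inv[OF aR])
    then have "rho \<delta> ([] @ u) (a (rho \<delta> u x)) = (\<lambda>p. 0)" unfolding T_def by blast
    then show "(rho \<delta> u \<circ> a \<circ> rho \<delta> u) x = (\<lambda>p. 0)" by simp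
  qed
  have "rho \<delta> u \<in> jacobson_rad (R_alg \<delta>)"
    by (rule rad_lemma[OF rho_in_R nil])
  then have "u \<in> Rad_words \<delta>" unfolding Rad_words_def by simp
  then have "u \<in> Syn \<delta>" using ss unfolding semisimple_def by simp
  then show False using nr unfolding Syn_def by simp
qed


definition img :: "('q \<Rightarrow> 'a \<Rightarrow> 'q) \<Rightarrow> 'a list \<Rightarrow> 'q set" where
  "img \<delta> w = range (\<lambda>q. word_act \<delta> q w)"

definition rk :: "('q \<Rightarrow> 'a \<Rightarrow> 'q) \<Rightarrow> 'a list \<Rightarrow> nat" where
  "rk \<delta> w = card (img \<delta> w)"

lemma reset_iff: "is_reset \<delta> u \<longleftrightarrow> rk \<delta> u = 1"
  by (simp add: is_reset_def rk_def img_def)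

lemma img_append: "img \<delta> (u @ v) = (\<lambda>q. word_act \<delta> q v) ` img \<delta> u"
  by (auto simp: img_def word_act_append)

lemma rk_pos:
  fixes \<delta> :: "'q::finite \<Rightarrow> 'a \<Rightarrow> 'q"
  shows "1 \<le> rk \<delta> u"
  by (simp add: rk_def img_def Suc_le_eq card_gt_0_iff)

lemma rk_app1:
  fixes \<delta> :: "'q::finite \<Rightarrow> 'a \<Rightarrow> 'q"
  shows "rk \<delta> (u @ v) \<le> rk \<delta> u"
  unfolding rk_def img_append by (rule card_image_le) simp

lemma rk_app2:
  fixes \<delta> :: "'q::finite \<Rightarrow> 'a \<Rightarrow> 'q"
  shows "rk \<delta> (u @ v) \<le> rk \<delta> v"
  unfolding rk_def by (rule card_mono) (auto simp: img_def word_act_append)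

lemma reset_app:
  fixes \<delta> :: "'q::finite \<Rightarrow> 'a \<Rightarrow> 'q"
  shows "is_reset \<delta> u \<Longrightarrow> is_reset \<delta> (u @ v)"
  using rk_app1[of \<delta> u v] rk_pos[of \<delta> "u@v"] by (simp add: reset_iff)

lemma reset_app2:
  fixes \<delta> :: "'q::finite \<Rightarrow> 'a \<Rightarrow> 'q"
  shows "is_reset \<delta> v \<Longrightarrow> is_reset \<delta> (u @ v)"
  using rk_app2[of \<delta> u v] rk_pos[of \<delta> "u@v"] by (simp add: reset_iff)

lemma former_rank_le:
  fixes \<delta> :: "'q::finite \<Rightarrow> 'a \<Rightarrow> 'q"
  assumes "\<not> is_reset \<delta> u"
  shows "former_rank \<delta> \<le> rk \<delta> u"
proof -
  have "{card ((\<lambda>q. word_act \<delta> q u) ` UNIV) | u. u \<notin> Syn \<delta>} \<subseteq> {..CARD('q)}"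
    by (auto intro: card_mono)
  then have fin: "finite {card ((\<lambda>q. word_act \<delta> q u) ` UNIV) | u. u \<notin> Syn \<delta>}"
    using finite_subset by blast
  have "rk \<delta> u \<in> {card ((\<lambda>q. word_act \<delta> q u) ` UNIV) | u. u \<notin> Syn \<delta>}"
    using assms by (auto simp: rk_def img_def Syn_def)
  then show ?thesis unfolding former_rank_def using Min_le[OF fin] by blast
qed

lemma packing_fin:
  fixes n r t :: nat
  shows "finite {card F | F. F \<subseteq> {S. S \<subseteq> {1..n} \<and> card S = r}
      \<and> (\<forall>T. T \<subseteq> {1..n} \<and> card T = t \<longrightarrow> card {S\<in>F. T \<subseteq> S} \<le> 1)}"
proof -
  have "{card F | F. F \<subseteq> {S. S \<subseteq> {1..n} \<and> card S = r}
      \<and> (\<forall>T. T \<subseteq> {1..n} \<and> card T = t \<longrightarrow> card {S\<in>F. T \<subseteq> S} \<le> 1)}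
      \<subseteq> card ` Pow (Pow {1..n})" by auto
  then show ?thesis by (rule finite_subset) (intro finite_imageI, simp add: finite_Pow_iff)
qed

lemma packing_lower:
  fixes B :: "nat \<Rightarrow> 'q::finite set"
  assumes cB: "\<And>i. i < L \<Longrightarrow> r \<le> card (B i)"
    and iB: "\<And>i j. i < L \<Longrightarrow> j < L \<Longrightarrow> i \<noteq> j \<Longrightarrow> card (B i \<inter> B j) \<le> 1"
    and r2: "2 \<le> r"
  shows "L \<le> packing_number 2 r CARD('q)"
proof -
  obtain f :: "'q \<Rightarrow> nat" where f: "bij_betw f UNIV {1..CARD('q)}"
    using bij_betw_iff_card[of "UNIV :: 'q set" "{1..CARD('q)}"] by auto
  have finj: "inj f" using f bij_betw_imp_inj_on by blast
  have fim: "\<And>A. f ` A \<subseteq> {1..CARD('q)}" using f bij_betw_imp_surj_on by blast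
  define C where "C i = (SOME T. T \<subseteq> B i \<and> card T = r)" for i
  have C: "C i \<subseteq> B i \<and> card (C i) = r" if iL: "i < L" for i
  proof -
    obtain T where "T \<subseteq> B i" "card T = r" using obtain_subset_with_card_n[of r "B i"] cB[OF iL] by blast
    then have "T \<subseteq> B i \<and> card T = r" by simp
    then show ?thesis unfolding C_def by (rule someI[of "\<lambda>T. T \<subseteq> B i \<and> card T = r"])
  qed
  have iC: "card (C i \<inter> C j) \<le> 1" if "i < L" "j < L" "i \<noteq> j" for i j
  proof -
    have "card (C i \<inter> C j) \<le> card (B i \<inter> B j)"
      by (rule card_mono) (use C[OF that(1)] C[OF that(2)] in auto)
    then show ?thesis using iB[OF that] by simp
  qed
  define F where "F = (\<lambda>i. f ` C i) ` {..<L}"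
  have inj: "inj_on (\<lambda>i. f ` C i) {..<L}"
  proof
    fix i j assume ij: "i \<in> {..<L}" "j \<in> {..<L}" "f ` C i = f ` C j"
    then have "C i = C j" using finj by (simp add: inj_image_eq_iff)
    show "i = j"
    proof (rule ccontr)
      assume "i \<noteq> j"
      then have "card (C i \<inter> C j) \<le> 1" using iC ij by auto
      then show False using \<open>C i = C j\<close> C ij r2 by auto
    qed
  qed
  have cF: "card F = L" unfolding F_def using card_image[OF inj] by simp
  have F1: "F \<subseteq> {S. S \<subseteq> {1..CARD('q)} \<and> card S = r}"
    unfolding F_def using fim C card_image[OF inj_on_subset[OF finj]] by auto
  have F2: "\<forall>T. T \<subseteq> {1..CARD('q)} \<and> card T = 2 \<longrightarrow> card {S\<in>F. T \<subseteq> S} \<le> 1"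
  proof (intro allI impI)
    fix T :: "nat set" assume T: "T \<subseteq> {1..CARD('q)} \<and> card T = 2"
    have finS: "finite {S\<in>F. T \<subseteq> S}" unfolding F_def by simp
    show "card {S\<in>F. T \<subseteq> S} \<le> 1"
      unfolding One_nat_def card_le_Suc0_iff_eq[OF finS]
    proof (intro ballI)
      fix S1 S2 assume S: "S1 \<in> {S\<in>F. T \<subseteq> S}" "S2 \<in> {S\<in>F. T \<subseteq> S}"
      then obtain i j where ij: "i < L" "j < L" "S1 = f ` C i" "S2 = f ` C j"
        unfolding F_def by auto
      show "S1 = S2"
      proof (cases "i = j")
        case False
        have "T \<subseteq> f ` C i \<inter> f ` C j" using S ij by auto
        also have "\<dots> = f ` (C i \<inter> C j)" using finj by (simp add: image_Int)
        finally have "card T \<le> card (f ` (C i \<inter> C j))" by (rule card_mono[rotated]) simp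
        also have "\<dots> \<le> card (C i \<inter> C j)" by (rule card_image_le) simp
        also have "\<dots> \<le> 1" using iC[OF ij(1,2) False] .
        finally show ?thesis using T by simp
      qed (use ij in simp)
    qed
  qed
  show ?thesis unfolding packing_number_def
    by (rule Max_ge[OF packing_fin]) (use cF F1 F2 in blast)
qed


lemma card_lt_of_merge:
  assumes "finite A" "p \<in> A" "q \<in> A" "p \<noteq> q" "f p = f q"
  shows "card (f ` A) < card A"
proof -
  have "\<not> inj_on f A" using assms unfolding inj_on_def by blast
  then have "card (f ` A) \<noteq> card A" using inj_on_iff_eq_card[OF assms(1)] by blast
  moreover have "card (f ` A) \<le> card A" by (rule card_image_le[OF assms(1)])
  ultimately show ?thesis by simp
qed

lemma two_elems:
  assumes "finite A" "2 \<le> card A"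
  obtains p q where "p \<in> A" "q \<in> A" "p \<noteq> q"
proof -
  have "\<not> card A \<le> Suc 0" using assms by simp
  then show ?thesis using card_le_Suc0_iff_eq[OF assms(1)] that by blast
qed

lemma compress:
  fixes \<delta> :: "'q::finite \<Rightarrow> 'a \<Rightarrow> 'q"
  assumes ss: "\<And>u. \<not> is_reset \<delta> u \<Longrightarrow> \<exists>y. \<not> is_reset \<delta> (u @ y @ u)"
    and sync: "is_reset \<delta> s0"
    and r2: "2 \<le> former_rank \<delta>"
    and nr: "\<not> is_reset \<delta> x"
  shows "\<exists>c. length c \<le> packing_number 2 (former_rank \<delta>) CARD('q) \<and> rk \<delta> (x @ c) < rk \<delta> x"
proof -
  obtain ab where ab: "\<not> is_reset \<delta> (fst ab @ x @ snd ab)"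
    and abmin: "\<And>ab'. \<not> is_reset \<delta> (fst ab' @ x @ snd ab') \<Longrightarrow> rk \<delta> (fst ab @ x @ snd ab) \<le> rk \<delta> (fst ab' @ x @ snd ab')"
    using ex_has_least_nat[of "\<lambda>ab. \<not> is_reset \<delta> (fst ab @ x @ snd ab)" "([],[])" "\<lambda>ab. rk \<delta> (fst ab @ x @ snd ab)"] nr
    by auto
  define a where "a = fst ab"
  define b where "b = snd ab"
  define w where "w = a @ x @ b"
  define m where "m = rk \<delta> w"
  have wnr: "\<not> is_reset \<delta> w" using ab unfolding w_def a_def b_def .
  have mmin: "\<And>a' b'. \<not> is_reset \<delta> (a' @ x @ b') \<Longrightarrow> m \<le> rk \<delta> (a' @ x @ b')"
    using abmin[of "(a', b')" for a' b'] unfolding m_def w_def a_def b_def by auto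
  obtain y where y: "\<not> is_reset \<delta> (w @ y @ w)" using ss[OF wnr] by blast
  define t where "t = a @ x @ b @ y @ a"
  define w' where "w' = t @ x"
  have w'nr: "\<not> is_reset \<delta> w'"
  proof
    assume "is_reset \<delta> w'"
    then have "is_reset \<delta> (w' @ b)" by (rule reset_app)
    moreover have "w' @ b = w @ y @ w" unfolding w'_def t_def w_def by simp
    ultimately show False using y by simp
  qed
  have K: "\<And>s. \<not> is_reset \<delta> (w' @ s) \<Longrightarrow> rk \<delta> (w' @ s) = m"
  proof -
    fix s assume h: "\<not> is_reset \<delta> (w' @ s)"
    have "m \<le> rk \<delta> (t @ x @ s)" using mmin[of t s] h unfolding w'_def by simp
    moreover have "rk \<delta> (w' @ s) \<le> rk \<delta> w" 
    proof -
      have "w' @ s = w @ (y @ a @ x @ s)" unfolding w'_def t_def w_def by simp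
      then show ?thesis using rk_app1[of \<delta> w "y @ a @ x @ s"] by simp
    qed
    ultimately show "rk \<delta> (w' @ s) = m" unfolding m_def w'_def by simp
  qed
  have K2: "\<And>s. rk \<delta> (w' @ s) < m \<Longrightarrow> is_reset \<delta> (w' @ s)" using K by fastforce
  have rw': "rk \<delta> w' = m" using K[of "[]"] w'nr by simp
  have rm: "former_rank \<delta> \<le> m" using former_rank_le[OF w'nr] rw' by simp
  obtain c where c: "is_reset \<delta> (w' @ c)"
    and cmin: "\<And>c'. is_reset \<delta> (w' @ c') \<Longrightarrow> length c \<le> length c'"
    using ex_has_least_nat[of "\<lambda>c. is_reset \<delta> (w' @ c)" s0 length] reset_app2[OF sync, of w']
    by blast
  define L where "L = length c"
  define B where "B i = img \<delta> (w' @ take i c)" for i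
  have Bnr: "\<not> is_reset \<delta> (w' @ take i c)" if "i < L" for i
  proof
    assume "is_reset \<delta> (w' @ take i c)"
    then have "length c \<le> length (take i c)" by (rule cmin)
    then show False using that unfolding L_def by simp
  qed
  have Bc: "card (B i) = m" if "i < L" for i
    using K[OF Bnr[OF that]] unfolding B_def rk_def by simp
  have Binter: "card (B i \<inter> B j) \<le> 1" if ij: "i < L" "j < L" "i \<noteq> j" for i j
  proof -
    have gen: "card (B i \<inter> B j) \<le> 1" if ij: "i < j" "j < L" for i j
    proof (rule ccontr)
      assume "\<not> card (B i \<inter> B j) \<le> 1"
      then have "2 \<le> card (B i \<inter> B j)" by simp
      moreover have "finite (B i \<inter> B j)" by simp
      ultimately obtain p q where pq: "p \<in> B i \<inter> B j" "q \<in> B i \<inter> B j" "p \<noteq> q"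
        using two_elems[of "B i \<inter> B j"] by blast
      define v where "v = drop j c"
      have "img \<delta> (w' @ c) = (\<lambda>s. word_act \<delta> s v) ` B j"
        unfolding B_def v_def img_append[symmetric] by simp
      then have "card ((\<lambda>s. word_act \<delta> s v) ` B j) = 1" using c by (simp add: reset_iff rk_def)
      then obtain z where z: "(\<lambda>s. word_act \<delta> s v) ` B j = {z}" by (rule card_1_singletonE)
      have "word_act \<delta> p v \<in> (\<lambda>s. word_act \<delta> s v) ` B j" "word_act \<delta> q v \<in> (\<lambda>s. word_act \<delta> s v) ` B j"
        using pq by auto
      then have pqv: "word_act \<delta> p v = word_act \<delta> q v" unfolding z by simp
      have "rk \<delta> (w' @ (take i c @ v)) = card ((\<lambda>s. word_act \<delta> s v) ` B i)"
        unfolding rk_def B_def img_append[symmetric] by simp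
      also have "\<dots> < card (B i)"
        by (rule card_lt_of_merge[OF _ _ _ pq(3) pqv]) (use pq in auto)
      also have "\<dots> = m" using Bc ij by simp
      finally have "is_reset \<delta> (w' @ (take i c @ v))" by (rule K2)
      then have "length c \<le> length (take i c @ v)" by (rule cmin)
      then show False using ij unfolding v_def L_def by simp
    qed
    show ?thesis
    proof (cases "i < j")
      case True then show ?thesis using gen ij by blast
    next
      case False then have "j < i" using ij by simp
      then show ?thesis using gen[of j i] ij by (simp add: Int_commute)
    qed
  qed
  have Lbound: "L \<le> packing_number 2 (former_rank \<delta>) CARD('q)"
    by (rule packing_lower[of L "former_rank \<delta>" B]) (use Bc rm Binter r2 in auto)
  have sub: "img \<delta> w' \<subseteq> img \<delta> x" unfolding w'_def img_def by (auto simp: word_act_append)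
  have m2: "2 \<le> card (img \<delta> w')" using rw' rm r2 unfolding rk_def by simp
  have fw: "finite (img \<delta> w')" by simp
  obtain p q where pq: "p \<in> img \<delta> w'" "q \<in> img \<delta> w'" "p \<noteq> q" using two_elems[OF fw m2] by blast
  have "card (img \<delta> (w' @ c)) = 1" using c by (simp add: reset_iff rk_def)
  then have "card ((\<lambda>s. word_act \<delta> s c) ` img \<delta> w') = 1" by (simp add: img_append)
  then obtain z where z: "(\<lambda>s. word_act \<delta> s c) ` img \<delta> w' = {z}" by (rule card_1_singletonE)
  have "word_act \<delta> p c \<in> (\<lambda>s. word_act \<delta> s c) ` img \<delta> w'" "word_act \<delta> q c \<in> (\<lambda>s. word_act \<delta> s c) ` img \<delta> w'"
    using pq by auto
  then have pqc: "word_act \<delta> p c = word_act \<delta> q c" unfolding z by simp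
  have "rk \<delta> (x @ c) < rk \<delta> x"
    unfolding rk_def img_append
    by (rule card_lt_of_merge[OF _ _ _ pq(3) pqc]) (use pq sub in auto)
  then show ?thesis using Lbound unfolding L_def by blast
qed

lemma iterate:
  fixes \<delta> :: "'q::finite \<Rightarrow> 'a \<Rightarrow> 'q"
  assumes ss: "\<And>u. \<not> is_reset \<delta> u \<Longrightarrow> \<exists>y. \<not> is_reset \<delta> (u @ y @ u)"
    and sync: "is_reset \<delta> s0"
    and r2: "2 \<le> former_rank \<delta>"
  shows "\<exists>c. is_reset \<delta> (x @ c) \<and> length c \<le> (rk \<delta> x - 1) * packing_number 2 (former_rank \<delta>) CARD('q)"
proof (induction "rk \<delta> x" arbitrary: x rule: less_induct)
  case less
  define D where "D = packing_number 2 (former_rank \<delta>) CARD('q)"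
  show ?case
  proof (cases "is_reset \<delta> x")
    case True
    then show ?thesis by (intro exI[of _ "[]"]) simp
  next
    case False
    obtain c1 where c1: "length c1 \<le> D" "rk \<delta> (x @ c1) < rk \<delta> x"
      using compress[OF ss sync r2 False] unfolding D_def by blast
    obtain c2 where c2: "is_reset \<delta> ((x @ c1) @ c2)" "length c2 \<le> (rk \<delta> (x @ c1) - 1) * D"
      using less(1)[OF c1(2)] unfolding D_def by blast
    have "1 \<le> rk \<delta> (x @ c1)" by (rule rk_pos)
    then have "length (c1 @ c2) \<le> (rk \<delta> x - 1) * D"
      using c1 c2(2)
    proof -
      assume h: "1 \<le> rk \<delta> (x @ c1)"
      have A: "(rk \<delta> (x @ c1) - 1) * D \<le> (rk \<delta> x - 2) * D"
        by (rule mult_right_mono) (use c1(2) h in auto)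
      have B: "D + (rk \<delta> x - 2) * D = (rk \<delta> x - 1) * D"
        using c1(2) h by (cases "rk \<delta> x") (auto simp: algebra_simps)
      have "length (c1 @ c2) = length c1 + length c2" by simp
      then show ?thesis using A B c1(1) c2(2) by linarith
    qed
    then show ?thesis using c2(1) unfolding D_def by (intro exI[of _ "c1 @ c2"]) simp
  qed
qed


lemma two_choose: "2 * (k choose 2) = k * (k - 1)"
proof (induction k)
  case 0 then show ?case by simp
next
  case (Suc k)
  have "(Suc k choose 2) = (k choose 1) + (k choose 2)"
    using binomial_Suc_Suc[of k 1] by (simp add: numeral_2_eq_2)
  then show ?case using Suc by (cases k) (auto simp: algebra_simps)
qed

lemma packing_upper:
  fixes r n :: nat
  assumes r2: "2 \<le> r"
  shows "packing_number 2 r n * (r * (r - 1)) \<le> n * (n - 1)"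
proof -
  define cond where "cond F \<longleftrightarrow> F \<subseteq> {S. S \<subseteq> {1..n} \<and> card S = r}
      \<and> (\<forall>T. T \<subseteq> {1..n} \<and> card T = 2 \<longrightarrow> card {S\<in>F. T \<subseteq> S} \<le> 1)" for F :: "nat set set"
  have eq: "packing_number 2 r n = Max {card F | F. cond F}"
    unfolding packing_number_def cond_def by simp
  have fin: "finite {card F | F. cond F}" using packing_fin[of n r 2] unfolding cond_def by simp
  have ne: "{card F | F. cond F} \<noteq> {}"
  proof -
    have "cond {}" unfolding cond_def by simp
    then show ?thesis by blast
  qed
  obtain F where DF: "packing_number 2 r n = card F" and cF: "cond F"
    using Max_in[OF fin ne] unfolding eq by blast
  have F1: "F \<subseteq> {S. S \<subseteq> {1..n} \<and> card S = r}"
    and F2: "\<And>T. T \<subseteq> {1..n} \<Longrightarrow> card T = 2 \<Longrightarrow> card {S\<in>F. T \<subseteq> S} \<le> 1"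
    using cF unfolding cond_def by blast+
  have finF: "finite F"
  proof (rule finite_subset)
    show "F \<subseteq> Pow {1..n}" using F1 by auto
  qed simp
  define P where "P S = {T. T \<subseteq> S \<and> card T = (2::nat)}" for S :: "nat set"
  have finS: "\<And>S. S \<in> F \<Longrightarrow> finite S" using F1 finite_subset[of _ "{1..n}"] by auto
  have cP: "\<And>S. S \<in> F \<Longrightarrow> card (P S) = r choose 2"
    unfolding P_def using n_subsets finS F1 by auto
  have finP: "\<And>S. S \<in> F \<Longrightarrow> finite (P S)" unfolding P_def
    using finS by (auto intro: finite_subset[of _ "Pow _"])
  have disj: "\<forall>S1\<in>F. \<forall>S2\<in>F. S1 \<noteq> S2 \<longrightarrow> P S1 \<inter> P S2 = {}"
  proof (intro ballI impI)
    fix S1 S2 assume S: "S1 \<in> F" "S2 \<in> F" "S1 \<noteq> S2"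
    show "P S1 \<inter> P S2 = {}"
    proof (rule ccontr)
      assume "P S1 \<inter> P S2 \<noteq> {}"
      then obtain T where T: "T \<subseteq> S1" "T \<subseteq> S2" "card T = 2" unfolding P_def by blast
      have "T \<subseteq> {1..n}" using T(1) S(1) F1 by blast
      then have c1: "card {S\<in>F. T \<subseteq> S} \<le> Suc 0" using F2 T by simp
      have "finite {S\<in>F. T \<subseteq> S}" using finF by simp
      then have "\<forall>a\<in>{S\<in>F. T \<subseteq> S}. \<forall>b\<in>{S\<in>F. T \<subseteq> S}. a = b"
        using c1 card_le_Suc0_iff_eq by blast
      then show False using S T by blast
    qed
  qed
  have "card (\<Union>S\<in>F. P S) = (\<Sum>S\<in>F. card (P S))"
    by (rule card_UN_disjoint[OF finF _ disj]) (use finP in blast)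
  also have "\<dots> = card F * (r choose 2)" using cP by simp
  finally have cU: "card (\<Union>S\<in>F. P S) = card F * (r choose 2)" .
  have "(\<Union>S\<in>F. P S) \<subseteq> P {1..n}" unfolding P_def using F1 by auto
  then have "card (\<Union>S\<in>F. P S) \<le> card (P {1..n})"
    by (rule card_mono[rotated]) (auto simp: P_def intro: finite_subset[of _ "Pow {1..n}"])
  also have "\<dots> = n choose 2" unfolding P_def using n_subsets[of "{1..n}" 2] by simp
  finally have "card F * (r choose 2) \<le> n choose 2" using cU by simp
  then have "card F * (2 * (r choose 2)) \<le> 2 * (n choose 2)" by simp
  then show ?thesis unfolding two_choose DF .
qed


theorem mainTheorem1:
  fixes \<delta> :: "'q::finite \<Rightarrow> 'a::finite \<Rightarrow> 'q"
  assumes "semisimple \<delta>"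
    and "former_rank \<delta> \<ge> 2"
  shows "(\<exists>u\<in>Syn \<delta>. length u \<le> (CARD('q) - 1) * packing_number 2 (former_rank \<delta>) (CARD('q)))
       \<and> (\<exists>u\<in>Syn \<delta>. real (length u) \<le> real (CARD('q)) * (real (CARD('q)) - 1)^2
              / (real (former_rank \<delta>) * (real (former_rank \<delta>) - 1)))"
proof -
  define n where "n = CARD('q)"
  define r where "r = former_rank \<delta>"
  define D where "D = packing_number 2 r n"
  have ss: "\<And>u. \<not> is_reset \<delta> u \<Longrightarrow> \<exists>y. \<not> is_reset \<delta> (u @ y @ u)"
    using semisimple_uyu[OF assms(1)] by blast
  obtain s0 where s0: "is_reset \<delta> s0"
    using assms(1) unfolding semisimple_def synchronizing_def Syn_def by blast
  obtain c where c: "is_reset \<delta> ([] @ c)"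
    and cl: "length c \<le> (rk \<delta> [] - 1) * packing_number 2 (former_rank \<delta>) CARD('q)"
    using iterate[OF ss s0 assms(2), of "[]"] by blast
  have rk0: "rk \<delta> [] = n" unfolding rk_def img_def n_def by simp
  have cS: "c \<in> Syn \<delta>" using c unfolding Syn_def by simp
  have len: "length c \<le> (n - 1) * D" using cl rk0 unfolding D_def r_def n_def by simp
  have r2: "2 \<le> r" using assms(2) unfolding r_def .
  have pu: "D * (r * (r - 1)) \<le> n * (n - 1)" unfolding D_def by (rule packing_upper[OF r2])
  have n1: "1 \<le> n" unfolding n_def by simp
  have rpos: "0 < real r * (real r - 1)" using r2 by simp
  have "real (length c) * (real r * (real r - 1)) \<le> real ((n - 1) * D) * (real r * (real r - 1))"
  proof (rule mult_right_mono)
    show "real (length c) \<le> real ((n - 1) * D)" using len by (simp only: of_nat_le_iff)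
  qed (use rpos in simp)
  also have "\<dots> = real (n - 1) * real (D * (r * (r - 1)))"
  proof -
    have rr: "real (r - 1) = real r - 1" using r2 by (simp add: of_nat_diff)
    show ?thesis by (simp only: of_nat_mult rr mult.assoc)
  qed
  also have "\<dots> \<le> real (n - 1) * real (n * (n - 1))"
  proof (rule mult_left_mono)
    show "real (D * (r * (r - 1))) \<le> real (n * (n - 1))" using pu by (simp only: of_nat_le_iff)
  qed simp
  also have "\<dots> = real n * (real n - 1)^2"
    using n1 by (simp add: of_nat_diff power2_eq_square algebra_simps)
  finally have "real (length c) \<le> real n * (real n - 1)^2 / (real r * (real r - 1))"
    using rpos by (simp add: pos_le_divide_eq)
  then show ?thesis using cS len unfolding n_def r_def D_def by blast
qed

end
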